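(* In the Gaussian sequential learning model with binary states and heterogeneous privacy budgets described in the context, where the budgets $\varepsilon_n$ are drawn independently from the uniform distribution $\mathrm{U}[0,1]$, asymptotic learning occurs almost surely under the smooth randomized response strategy.
   Context: Gaussian model: unknown state $\theta\in\{-1,+1\}$ with uniform prior; agents $n=1,2,\dots$ act in sequence; agent $n$ privately observes $s_n\sim\mathcal{N}(\theta,\sigma^2)$, i.i.d. given $\theta$, $\sigma>0$, and has a private budget $\varepsilon_n\sim\mathrm{U}[0,1]$, independent across agents and of everything else. The public log-likelihood ratio is $l_n=\log\frac{\mathbb{P}(\theta=+1\mid x_1,\dots,x_{n-1})}{\mathbb{P}(\theta=-1\mid x_1,\dots,x_{n-1})}$, $l_1=0$, where $x_i$ are reported actions. With $t(l)=-\sigma^2l/2$, agent $n$'s intended action is $a_n=+1$ if $s_n>t(l_n)$, else $-1$; under smooth randomized response she reports $x_n=a_n$ with probability $1-u_n$ and $x_n=-a_n$ with probability $u_n=\frac12e^{-\varepsilon_n|s_n-t(l_n)|}$. The public, not observing $\varepsilon_n$, updates $l_{n+1}=l_n+\log\frac{\mathbb{P}(x_n\mid l_n,\theta=+1)}{\mathbb{P}(x_n\mid l_n,\theta=-1)}$, where these probabilities average over both $s_n$ and $\varepsilon_n$. Asymptotic learning means agents' actions converge to the true state, i.e., $\lim_{n\to\infty}\mathbb{P}(a_n=\theta)=1$. *)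

theory Defs
  imports "HOL-Probability.Probability"
begin

text \<open>States and actions are encoded as the reals -1 and +1.
  l denotes the current public log-likelihood ratio.\<close>

definition thr :: "real \<Rightarrow> real \<Rightarrow> real" where
  "thr \<sigma> l = - (\<sigma>\<^sup>2 * l / 2)"

definition act :: "real \<Rightarrow> real \<Rightarrow> real \<Rightarrow> real" where
  "act \<sigma> l s = (if s > thr \<sigma> l then 1 else -1)"

definition flip_prob :: "real \<Rightarrow> real \<Rightarrow> real \<Rightarrow> real \<Rightarrow> real" where
  "flip_prob \<sigma> l s \<epsilon> = exp (- \<epsilon> * \<bar>s - thr \<sigma> l\<bar>) / 2"

definition report_prob :: "real \<Rightarrow> real \<Rightarrow> real \<Rightarrow> real \<Rightarrow> real \<Rightarrow> real" where
  "report_prob \<sigma> l s \<epsilon> x =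
     (if x = act \<sigma> l s then 1 - flip_prob \<sigma> l s \<epsilon> else flip_prob \<sigma> l s \<epsilon>)"

text \<open>P(x_n = x | l_n = l, theta): averaged over s ~ N(theta, sigma^2) and
  eps ~ U[0,1] (density 1 on [0,1]).\<close>
definition xprob :: "real \<Rightarrow> real \<Rightarrow> real \<Rightarrow> real \<Rightarrow> real" where
  "xprob \<sigma> l \<theta> x =
     (LINT s|lborel. normal_density \<theta> \<sigma> s *
        (LINT \<epsilon>:{0..1}|lborel. report_prob \<sigma> l s \<epsilon> x))"

definition upd :: "real \<Rightarrow> real \<Rightarrow> real \<Rightarrow> real" where
  "upd \<sigma> l x = l + ln (xprob \<sigma> l 1 x / xprob \<sigma> l (-1) x)"

text \<open>Conditional law (given theta) of the public LLR: llr_law sigma theta n is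
  the distribution of l_{n+1}; llr_law sigma theta 0 is l_1 = 0.\<close>
primrec llr_law :: "real \<Rightarrow> real \<Rightarrow> nat \<Rightarrow> real pmf" where
  "llr_law \<sigma> \<theta> 0 = return_pmf 0"
| "llr_law \<sigma> \<theta> (Suc n) =
     bind_pmf (llr_law \<sigma> \<theta> n)
       (\<lambda>l. map_pmf (\<lambda>b. upd \<sigma> l (if b then 1 else -1))
               (bernoulli_pmf (xprob \<sigma> l \<theta> 1)))"

definition correct_prob_given :: "real \<Rightarrow> real \<Rightarrow> real \<Rightarrow> real" where
  "correct_prob_given \<sigma> \<theta> l =
     (LINT s|lborel. normal_density \<theta> \<sigma> s * indicator {s. act \<sigma> l s = \<theta>} s)"

text \<open>P(a_n = theta) for agent n (n >= 1), theta uniform on {-1,+1}.\<close>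
definition prob_correct :: "real \<Rightarrow> nat \<Rightarrow> real" where
  "prob_correct \<sigma> n =
     (\<Sum>\<theta>\<in>{-1, 1::real}. (1/2) *
        measure_pmf.expectation (llr_law \<sigma> \<theta> (n - 1)) (correct_prob_given \<sigma> \<theta>))"

end

theory Submission
  imports Defs
begin


lemma rp_meas[measurable]: "(\<lambda>(s,e). report_prob \<sigma> l s e x) \<in> borel_measurable (lborel \<Otimes>\<^sub>M lborel)"
  unfolding report_prob_def flip_prob_def act_def thr_def by measurable

lemma rp_meas2[measurable]: "(\<lambda>e. report_prob \<sigma> l s e x) \<in> borel_measurable lborel"
  unfolding report_prob_def flip_prob_def act_def thr_def by measurable

definition GG :: "real \<Rightarrow> real \<Rightarrow> real \<Rightarrow> real \<Rightarrow> real" where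
  "GG \<sigma> l x s = (LINT e:{0..1}|lborel. report_prob \<sigma> l s e x)"

lemma GG_meas[measurable]: "GG \<sigma> l x \<in> borel_measurable lborel"
  unfolding GG_def set_lebesgue_integral_def by measurable

lemma flip_pos: "0 < flip_prob \<sigma> l s e"
  by (simp add: flip_prob_def)

lemma flip_le: "0 \<le> e \<Longrightarrow> flip_prob \<sigma> l s e \<le> 1/2"
  unfolding flip_prob_def by simp

lemma flip_ge: "e \<le> 1 \<Longrightarrow> exp (- \<bar>s - thr \<sigma> l\<bar>) / 2 \<le> flip_prob \<sigma> l s e"
  unfolding flip_prob_def
  using mult_right_mono[of e 1 "\<bar>s - thr \<sigma> l\<bar>"] by simp

lemma rp_bounds: "0 \<le> e \<Longrightarrow> 0 \<le> report_prob \<sigma> l s e x \<and> report_prob \<sigma> l s e x \<le> 1"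
  using flip_pos[of \<sigma> l s e] flip_le[of e \<sigma> l s] unfolding report_prob_def by auto

lemma rp_ge_flip: "0 \<le> e \<Longrightarrow> flip_prob \<sigma> l s e \<le> report_prob \<sigma> l s e x"
  using flip_pos[of \<sigma> l s e] flip_le[of e \<sigma> l s] unfolding report_prob_def by auto

lemma rp_neg: "report_prob \<sigma> l s e (-1) = 1 - report_prob \<sigma> l s e 1"
  unfolding report_prob_def act_def by auto

lemma rp_si: "set_integrable lborel {0..1} (\<lambda>e. report_prob \<sigma> l s e x)"
  unfolding set_integrable_def
  by (rule integrableI_bounded_set_indicator[where B=1]) (auto simp: rp_bounds)

lemma si_const: "set_integrable lborel {0..1::real} (\<lambda>e. c::real)"
  unfolding set_integrable_def
  by (rule integrableI_bounded_set_indicator[where B="\<bar>c\<bar>"]) auto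

lemma si_int_const: "(LINT e:{0..1::real}|lborel. c) = (c::real)"
  by (subst set_integral_const) auto

lemma GG_bounds: "0 \<le> GG \<sigma> l x s \<and> GG \<sigma> l x s \<le> 1"
proof
  have "(LINT e:{0..1::real}|lborel. 0) \<le> GG \<sigma> l x s"
    unfolding GG_def by (rule set_integral_mono[OF si_const rp_si]) (auto simp: rp_bounds)
  then show "0 \<le> GG \<sigma> l x s" by (simp add: si_int_const)
  have "GG \<sigma> l x s \<le> (LINT e:{0..1::real}|lborel. 1)"
    unfolding GG_def by (rule set_integral_mono[OF rp_si si_const]) (auto simp: rp_bounds)
  then show "GG \<sigma> l x s \<le> 1" by (simp add: si_int_const)
qed

lemma GG_neg: "GG \<sigma> l (-1) s = 1 - GG \<sigma> l 1 s"
  unfolding GG_def rp_neg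
  by (subst set_integral_diff(2)[OF si_const rp_si]) (simp add: si_int_const)

lemma GG_lower: "exp (- \<bar>s - thr \<sigma> l\<bar>) / 2 \<le> GG \<sigma> l x s"
proof -
  have "(LINT e:{0..1::real}|lborel. exp (- \<bar>s - thr \<sigma> l\<bar>) / 2) \<le> GG \<sigma> l x s"
    unfolding GG_def
    by (rule set_integral_mono[OF si_const rp_si]) (metis atLeastAtMost_iff flip_ge rp_ge_flip order_trans)
  then show ?thesis by (simp add: si_int_const)
qed

lemma rp_mono: "0 \<le> e \<Longrightarrow> s1 \<le> s2 \<Longrightarrow> report_prob \<sigma> l s1 e 1 \<le> report_prob \<sigma> l s2 e 1"
proof -
  assume e: "0 \<le> e" and s: "s1 \<le> s2"
  define t where "t = thr \<sigma> l"
  have m1: "e * (s1 - t) \<le> e * (s2 - t)" using e s by (intro mult_left_mono) auto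
  have m2: "e * (t - s2) \<le> e * (t - s1)" using e s by (intro mult_left_mono) auto
  have p1: "0 \<le> e * \<bar>s1 - t\<bar>" "0 \<le> e * \<bar>s2 - t\<bar>" using e by auto
  have q1: "exp (- e * \<bar>s1 - t\<bar>) \<le> 1" "exp (- e * \<bar>s2 - t\<bar>) \<le> 1" using p1 by auto
  consider "s2 \<le> t" | "s1 \<le> t" "t < s2" | "t < s1" using s by linarith
  then show ?thesis
  proof cases
    case 1
    then have "\<bar>s1 - t\<bar> = t - s1" "\<bar>s2 - t\<bar> = t - s2" using s by auto
    then show ?thesis using 1 s m2 unfolding report_prob_def act_def flip_prob_def t_def[symmetric] by auto
  next
    case 2
    then have "\<bar>s1 - t\<bar> = t - s1" "\<bar>s2 - t\<bar> = s2 - t" using s by auto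
    then have "exp (- (e * (t - s1))) \<le> 1" "exp (- (e * (s2 - t))) \<le> 1" using q1 by auto
    moreover have "report_prob \<sigma> l s1 e 1 = exp (- (e * (t - s1))) / 2" 
      "report_prob \<sigma> l s2 e 1 = 1 - exp (- (e * (s2 - t))) / 2"
      using 2 \<open>\<bar>s1 - t\<bar> = t - s1\<close> \<open>\<bar>s2 - t\<bar> = s2 - t\<close>
      unfolding report_prob_def act_def flip_prob_def t_def[symmetric] by auto
    ultimately show ?thesis by linarith
  next
    case 3
    then have "\<bar>s1 - t\<bar> = s1 - t" "\<bar>s2 - t\<bar> = s2 - t" using s by auto
    then show ?thesis using 3 s m1 unfolding report_prob_def act_def flip_prob_def t_def[symmetric] by auto
  qed
qed

lemma GG_mono: "s1 \<le> s2 \<Longrightarrow> GG \<sigma> l 1 s1 \<le> GG \<sigma> l 1 s2"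
  unfolding GG_def by (rule set_integral_mono[OF rp_si rp_si]) (auto intro: rp_mono)

lemma rp_gap: "0 \<le> e \<Longrightarrow> e \<le> 1 \<Longrightarrow> s1 \<le> thr \<sigma> l - 1/2 \<Longrightarrow> thr \<sigma> l + 1/2 \<le> s2 \<Longrightarrow>
  (1 - exp (-1/4)) * indicator {1/2..1} e \<le> (report_prob \<sigma> l s2 e 1 - report_prob \<sigma> l s1 e 1 :: real)"
proof -
  assume e: "0 \<le> e" "e \<le> 1" and s: "s1 \<le> thr \<sigma> l - 1/2" "thr \<sigma> l + 1/2 \<le> s2"
  have r2: "report_prob \<sigma> l s2 e 1 = 1 - exp (- e * (s2 - thr \<sigma> l)) / 2"
    using s unfolding report_prob_def act_def flip_prob_def by auto
  have r1: "report_prob \<sigma> l s1 e 1 = exp (- e * (thr \<sigma> l - s1)) / 2"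
    using s unfolding report_prob_def act_def flip_prob_def by auto
  have a: "exp (- e * (s2 - thr \<sigma> l)) \<le> exp (- e / 2)"
    using s e mult_left_mono[of "1/2" "s2 - thr \<sigma> l" e] by auto
  have b: "exp (- e * (thr \<sigma> l - s1)) \<le> exp (- e / 2)"
    using s e mult_left_mono[of "1/2" "thr \<sigma> l - s1" e] by auto
  have c: "(1 - exp (-1/4)) * indicator {1/2..1} e \<le> 1 - exp (- e / 2)"
    using e by (auto split: split_indicator)
  show ?thesis unfolding r1 r2 using a b c by linarith
qed

lemma GG_gap: "s1 \<le> thr \<sigma> l - 1/2 \<Longrightarrow> thr \<sigma> l + 1/2 \<le> s2 \<Longrightarrow>
  (1 - exp (-1/4)) / 2 \<le> GG \<sigma> l 1 s2 - GG \<sigma> l 1 s1"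
proof -
  assume s: "s1 \<le> thr \<sigma> l - 1/2" "thr \<sigma> l + 1/2 \<le> s2"
  have si: "set_integrable lborel {0..1::real} (\<lambda>e. (1 - exp (-1/4)) * indicator {1/2..1} e :: real)"
    unfolding set_integrable_def
    by (rule integrableI_bounded_set_indicator[where B="1"]) (auto split: split_indicator)
  have "(LINT e:{0..1::real}|lborel. (1 - exp (-1/4)) * indicator {1/2..1} e :: real) \<le> 
     (LINT e:{0..1::real}|lborel. report_prob \<sigma> l s2 e 1 - report_prob \<sigma> l s1 e 1)"
    by (rule set_integral_mono[OF si set_integral_diff(1)[OF rp_si rp_si]]) (use s rp_gap in auto)
  also have "\<dots> = GG \<sigma> l 1 s2 - GG \<sigma> l 1 s1"
    unfolding GG_def by (rule set_integral_diff(2)[OF rp_si rp_si])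
  also have "(LINT e:{0..1::real}|lborel. (1 - exp (-1/4)) * indicator {1/2..1} e :: real) = 
      (1 - exp (-1/4)) * measure lborel {1/2..1::real}"
  proof -
    have "(\<lambda>x. indicator {0..1} x *\<^sub>R ((1 - exp (-1/4)) * indicator {1/2..1} x)) = 
       (\<lambda>x. (1 - exp (-1/4)) * indicator {1/2..1::real} x :: real)"
      by (auto split: split_indicator)
    then show ?thesis unfolding set_lebesgue_integral_def by simp
  qed
  finally show ?thesis by simp
qed



lemma xprob_GG: "xprob \<sigma> l \<theta> x = (\<integral>s. normal_density \<theta> \<sigma> s * GG \<sigma> l x s \<partial>lborel)"
  unfolding xprob_def GG_def ..

lemma int_nG: "0 < \<sigma> \<Longrightarrow> integrable lborel (\<lambda>s. normal_density \<mu> \<sigma> s * GG \<sigma> l x (a + s))"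
  by (rule Bochner_Integration.integrable_bound[OF integrable_normal_density[where \<mu>=\<mu>]]) 
     (auto simp: GG_bounds mult_left_le)

lemma int_nG0: "0 < \<sigma> \<Longrightarrow> integrable lborel (\<lambda>s. normal_density \<mu> \<sigma> s * GG \<sigma> l x s)"
  using int_nG[of \<sigma> \<mu> l x 0] by simp

lemma xprob_neg: "0 < \<sigma> \<Longrightarrow> xprob \<sigma> l \<theta> (-1) = 1 - xprob \<sigma> l \<theta> 1"
proof -
  assume s: "0 < \<sigma>"
  have "xprob \<sigma> l \<theta> (-1) = (\<integral>s. normal_density \<theta> \<sigma> s - normal_density \<theta> \<sigma> s * GG \<sigma> l 1 s \<partial>lborel)"
    unfolding xprob_GG GG_neg by (simp add: algebra_simps)
  also have "\<dots> = 1 - xprob \<sigma> l \<theta> 1"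
    unfolding xprob_GG using Bochner_Integration.integral_diff[OF integrable_normal_density[OF s] int_nG0[OF s], of \<theta> \<theta> l 1] s
    by simp
  finally show ?thesis .
qed

lemma nd_lower: "0 < \<sigma> \<Longrightarrow> \<bar>x - \<mu>\<bar> \<le> K \<Longrightarrow> normal_density 0 \<sigma> K \<le> normal_density \<mu> \<sigma> x"
proof -
  assume s: "0 < \<sigma>" and k: "\<bar>x - \<mu>\<bar> \<le> K"
  have "(x - \<mu>)\<^sup>2 \<le> K\<^sup>2"
    using power_mono[OF k, of 2] by simp
  then have "- K\<^sup>2 / (2 * \<sigma>\<^sup>2) \<le> -(x - \<mu>)\<^sup>2 / (2 * \<sigma>\<^sup>2)"
    using s by (intro divide_right_mono) auto
  then show ?thesis unfolding normal_density_def
    using s by (intro mult_left_mono) auto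
qed

lemma int_lower:
  fixes f :: "real \<Rightarrow> real"
  assumes "integrable lborel f" "\<And>x. c * indicator {a..b} x \<le> f x" "a \<le> b"
  shows "c * (b - a) \<le> integral\<^sup>L lborel f"
proof -
  have "(\<integral>x. c * indicator {a..b} x \<partial>lborel) \<le> integral\<^sup>L lborel f"
    using assms by (intro integral_mono) auto
  then show ?thesis using assms(3) by simp
qed

lemma xprob_pos: "0 < \<sigma> \<Longrightarrow> 0 < xprob \<sigma> l \<theta> x"
proof -
  assume s: "0 < \<sigma>"
  define t where "t = thr \<sigma> l"
  define c where "c = normal_density 0 \<sigma> (\<bar>t - \<theta>\<bar> + 1/2) * (exp (-1/2) / 2)"
  have cpos: "0 < c" unfolding c_def using s by (simp add: normal_density_pos)
  have "c * indicator {t - 1/2..t + 1/2} u \<le> normal_density \<theta> \<sigma> u * GG \<sigma> l x u" for u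
  proof (cases "u \<in> {t - 1/2..t + 1/2}")
    case True
    have a: "normal_density 0 \<sigma> (\<bar>t - \<theta>\<bar> + 1/2) \<le> normal_density \<theta> \<sigma> u"
      using True s by (intro nd_lower) auto
    have "\<bar>u - thr \<sigma> l\<bar> \<le> 1/2" using True unfolding t_def abs_le_iff by auto
    then have "exp (-1/2) / 2 \<le> exp (- \<bar>u - thr \<sigma> l\<bar>) / 2" by simp
    also have "\<dots> \<le> GG \<sigma> l x u" by (rule GG_lower)
    finally have b: "exp (-1/2) / 2 \<le> GG \<sigma> l x u" .
    have m: "c \<le> normal_density \<theta> \<sigma> u * GG \<sigma> l x u" 
      unfolding c_def by (rule mult_mono[OF a b]) auto
    show ?thesis using True m by simp
  next
    case False
    then show ?thesis using GG_bounds[of \<sigma> l x u] by simp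
  qed
  then have "c * ((t + 1/2) - (t - 1/2)) \<le> xprob \<sigma> l \<theta> x"
    unfolding xprob_GG by (intro int_lower[OF int_nG0[OF s]]) auto
  then show ?thesis using cpos by simp
qed

lemma xprob_lt1: "0 < \<sigma> \<Longrightarrow> xprob \<sigma> l \<theta> 1 < 1"
  using xprob_neg[of \<sigma> l \<theta>] xprob_pos[of \<sigma> l \<theta> "-1"] by simp

definition dgap :: "real \<Rightarrow> real \<Rightarrow> real" where
  "dgap \<sigma> M = (1 - exp (-1/4)) / 2 * normal_density 0 \<sigma> (\<sigma>\<^sup>2 * M / 2 + 1/2)"

lemma dgap_pos: "0 < \<sigma> \<Longrightarrow> 0 < dgap \<sigma> M"
  unfolding dgap_def by (simp add: normal_density_pos)

lemma xprob_gap: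
  assumes s: "0 < \<sigma>" and lM: "\<bar>l\<bar> \<le> M"
  shows "dgap \<sigma> M \<le> xprob \<sigma> l 1 1 - xprob \<sigma> l (-1) 1"
proof -
  define t where "t = thr \<sigma> l"
  have e1: "xprob \<sigma> l 1 1 = (\<integral>u. normal_density 0 \<sigma> u * GG \<sigma> l 1 (1 + u) \<partial>lborel)"
    unfolding xprob_GG
    by (subst lborel_integral_real_affine[where c=1 and t=1]) (simp_all add: normal_density_def)
  have e2: "xprob \<sigma> l (-1) 1 = (\<integral>u. normal_density 0 \<sigma> u * GG \<sigma> l 1 (-1 + u) \<partial>lborel)"
    unfolding xprob_GG
    by (subst lborel_integral_real_affine[where c=1 and t="-1"]) (simp_all add: normal_density_def)
  have diff: "xprob \<sigma> l 1 1 - xprob \<sigma> l (-1) 1 = 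
     (\<integral>u. normal_density 0 \<sigma> u * (GG \<sigma> l 1 (1 + u) - GG \<sigma> l 1 (-1 + u)) \<partial>lborel)"
    unfolding e1 e2 using Bochner_Integration.integral_diff[OF int_nG[OF s] int_nG[OF s], of 0 l 1 1 0 l 1 "-1"]
    by (simp add: algebra_simps)
  have tM: "\<bar>t\<bar> \<le> \<sigma>\<^sup>2 * M / 2"
    unfolding t_def thr_def using lM s by (auto simp: abs_mult intro: mult_left_mono)
  have "dgap \<sigma> M * indicator {t - 1/2..t + 1/2} u \<le> 
      normal_density 0 \<sigma> u * (GG \<sigma> l 1 (1 + u) - GG \<sigma> l 1 (-1 + u))" for u
  proof (cases "u \<in> {t - 1/2..t + 1/2}")
    case True
    have a: "normal_density 0 \<sigma> (\<sigma>\<^sup>2 * M / 2 + 1/2) \<le> normal_density 0 \<sigma> u"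
      using True s tM by (intro nd_lower) auto
    have b: "(1 - exp (-1/4)) / 2 \<le> GG \<sigma> l 1 (1 + u) - GG \<sigma> l 1 (-1 + u)"
      using True by (intro GG_gap) (auto simp: t_def)
    have "0 \<le> (1 - exp (-1/4::real)) / 2" by simp
    then have "(1 - exp (-1/4)) / 2 * normal_density 0 \<sigma> (\<sigma>\<^sup>2 * M / 2 + 1/2)
       \<le> (GG \<sigma> l 1 (1 + u) - GG \<sigma> l 1 (-1 + u)) * normal_density 0 \<sigma> u"
      using b by (intro mult_mono[OF b a]; (linarith | simp))
    then have m: "dgap \<sigma> M \<le> normal_density 0 \<sigma> u * (GG \<sigma> l 1 (1 + u) - GG \<sigma> l 1 (-1 + u))"
      unfolding dgap_def by (simp add: mult.commute)
    show ?thesis using True m by simp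
  next
    case False
    have "GG \<sigma> l 1 (-1 + u) \<le> GG \<sigma> l 1 (1 + u)" by (intro GG_mono) auto
    then show ?thesis using False by simp
  qed
  then have "dgap \<sigma> M * ((t + 1/2) - (t - 1/2)) \<le> xprob \<sigma> l 1 1 - xprob \<sigma> l (-1) 1"
    unfolding diff using Bochner_Integration.integrable_diff[OF int_nG[OF s] int_nG[OF s], of 0 l 1 1 0 l 1 "-1"]
    by (intro int_lower) (auto simp: right_diff_distrib)
  then show ?thesis by simp
qed



lemma act_meas[measurable]: "act \<sigma> l \<in> borel_measurable lborel"
  unfolding act_def thr_def by measurable

lemma act_set_meas[measurable]: "{s. act \<sigma> l s = \<theta>} \<in> sets lborel" "{s. act \<sigma> l s \<noteq> \<theta>} \<in> sets lborel"
proof -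
  have "{s \<in> space lborel. act \<sigma> l s = \<theta>} \<in> sets lborel" "{s \<in> space lborel. act \<sigma> l s \<noteq> \<theta>} \<in> sets lborel"
    by measurable
  then show "{s. act \<sigma> l s = \<theta>} \<in> sets lborel" "{s. act \<sigma> l s \<noteq> \<theta>} \<in> sets lborel" by simp_all
qed

lemma cheb:
  assumes s: "0 < \<sigma>" and S: "S \<in> sets lborel" and tm: "t \<noteq> \<mu>"
    and far: "\<And>x. x \<in> S \<Longrightarrow> \<bar>t - \<mu>\<bar> \<le> \<bar>x - \<mu>\<bar>"
  shows "(\<integral>x. normal_density \<mu> \<sigma> x * indicator S x \<partial>lborel) \<le> \<sigma>\<^sup>2 / (t - \<mu>)\<^sup>2"
proof -
  have pos: "0 < (t - \<mu>)\<^sup>2" using tm by simp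
  have "(\<integral>x. normal_density \<mu> \<sigma> x * indicator S x \<partial>lborel) \<le>
        (\<integral>x. normal_density \<mu> \<sigma> x * (x - \<mu>) ^ (2 * 1) / (t - \<mu>)\<^sup>2 \<partial>lborel)"
  proof (rule integral_mono)
    show "integrable lborel (\<lambda>x. normal_density \<mu> \<sigma> x * indicator S x)"
      using S s by (intro integrable_real_mult_indicator) auto
    show "integrable lborel (\<lambda>x. normal_density \<mu> \<sigma> x * (x - \<mu>) ^ (2 * 1) / (t - \<mu>)\<^sup>2)"
      using integrable_normal_moment[OF s, of \<mu> 2] by simp
    fix x
    show "normal_density \<mu> \<sigma> x * indicator S x \<le> normal_density \<mu> \<sigma> x * (x - \<mu>) ^ (2 * 1) / (t - \<mu>)\<^sup>2"
    proof (cases "x \<in> S")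
      case True
      have "(t - \<mu>)\<^sup>2 \<le> (x - \<mu>)\<^sup>2"
        using far[OF True] by (metis abs_ge_zero power2_abs power_mono)
      then have "1 \<le> (x - \<mu>)\<^sup>2 / (t - \<mu>)\<^sup>2" using pos by simp
      then have "normal_density \<mu> \<sigma> x * 1 \<le> normal_density \<mu> \<sigma> x * ((x - \<mu>)\<^sup>2 / (t - \<mu>)\<^sup>2)"
        by (intro mult_left_mono) auto
      then show ?thesis using True by simp
    next
      case False
      then show ?thesis using pos by simp
    qed
  qed
  also have "\<dots> = (\<integral>x. normal_density \<mu> \<sigma> x * (x - \<mu>) ^ (2 * 1) \<partial>lborel) / (t - \<mu>)\<^sup>2"
    by simp
  also have "\<dots> = \<sigma>\<^sup>2 / (t - \<mu>)\<^sup>2"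
    using integral_normal_moment_even[OF s, of \<mu> 1] s by (simp add: power2_eq_square)
  finally show ?thesis .
qed

lemma correct_eq:
  assumes s: "0 < \<sigma>"
  shows "correct_prob_given \<sigma> \<theta> l = 1 - (\<integral>x. normal_density \<theta> \<sigma> x * indicator {s. act \<sigma> l s \<noteq> \<theta>} x \<partial>lborel)"
proof -
  have i1: "integrable lborel (\<lambda>x. normal_density \<theta> \<sigma> x * indicator {s. act \<sigma> l s = \<theta>} x)"
    using s by (intro integrable_real_mult_indicator) auto
  have i2: "integrable lborel (\<lambda>x. normal_density \<theta> \<sigma> x * indicator {s. act \<sigma> l s \<noteq> \<theta>} x)"
    using s by (intro integrable_real_mult_indicator) auto
  have "(\<lambda>x. normal_density \<theta> \<sigma> x * indicator {s. act \<sigma> l s = \<theta>} x + normal_density \<theta> \<sigma> x * indicator {s. act \<sigma> l s \<noteq> \<theta>} x)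
     = normal_density \<theta> \<sigma>"
    by (auto split: split_indicator)
  then have "correct_prob_given \<sigma> \<theta> l + (\<integral>x. normal_density \<theta> \<sigma> x * indicator {s. act \<sigma> l s \<noteq> \<theta>} x \<partial>lborel) = 1"
    unfolding correct_prob_given_def using Bochner_Integration.integral_add[OF i1 i2] s by simp
  then show ?thesis by simp
qed

lemma correct_le1: "0 < \<sigma> \<Longrightarrow> correct_prob_given \<sigma> \<theta> l \<le> 1"
  by (subst correct_eq) auto

lemma correct_ge0: "0 \<le> correct_prob_given \<sigma> \<theta> l"
  unfolding correct_prob_given_def by (auto intro: integral_nonneg_AE)

lemma correct_far:
  assumes s: "0 < \<sigma>" and th: "\<theta> = 1 \<or> \<theta> = -1" and M: "0 < M" and lM: "M \<le> \<theta> * l"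
  shows "1 - \<sigma>\<^sup>2 / (1 + \<sigma>\<^sup>2 * M / 2)\<^sup>2 \<le> correct_prob_given \<sigma> \<theta> l"
proof -
  define t where "t = thr \<sigma> l"
  have sl: "0 \<le> \<sigma>\<^sup>2 * (\<theta> * l)" using lM M by auto
  have ht: "\<bar>t - \<theta>\<bar> = 1 + \<sigma>\<^sup>2 * (\<theta> * l) / 2"
  proof (cases "\<theta> = 1")
    case True
    then have "t - \<theta> = - (1 + \<sigma>\<^sup>2 * (\<theta> * l) / 2)" unfolding t_def thr_def by simp
    then show ?thesis using sl by simp
  next
    case False
    then have "\<theta> = -1" using th by simp
    then have "t - \<theta> = 1 + \<sigma>\<^sup>2 * (\<theta> * l) / 2" unfolding t_def thr_def by simp
    then show ?thesis using sl by simp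
  qed
  have far: "\<bar>t - \<theta>\<bar> \<le> \<bar>x - \<theta>\<bar>" if xs: "x \<in> {s. act \<sigma> l s \<noteq> \<theta>}" for x
  proof (cases "\<theta> = 1")
    case True
    then have "\<not> x > t" using xs unfolding act_def t_def by auto
    moreover have "t - \<theta> = - (1 + \<sigma>\<^sup>2 * (\<theta> * l) / 2)" using True unfolding t_def thr_def by simp
    ultimately show ?thesis using sl True by simp
  next
    case False
    then have th1: "\<theta> = -1" using th by simp
    then have "x > t" using xs unfolding act_def t_def by (auto split: if_splits)
    moreover have "t - \<theta> = 1 + \<sigma>\<^sup>2 * (\<theta> * l) / 2" using th1 unfolding t_def thr_def by simp
    ultimately show ?thesis using sl th1 by simp
  qed
  have "0 < \<bar>t - \<theta>\<bar>" using ht sl by simp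
  then have tne: "t \<noteq> \<theta>" by auto
  have c: "(\<integral>x. normal_density \<theta> \<sigma> x * indicator {s. act \<sigma> l s \<noteq> \<theta>} x \<partial>lborel) \<le> \<sigma>\<^sup>2 / (t - \<theta>)\<^sup>2"
    by (rule cheb[OF s _ tne far]) auto
  have m: "\<sigma>\<^sup>2 * M \<le> \<sigma>\<^sup>2 * (\<theta> * l)" using lM by (intro mult_left_mono) auto
  have "(1 + \<sigma>\<^sup>2 * M / 2)\<^sup>2 \<le> (t - \<theta>)\<^sup>2"
    unfolding power2_abs[symmetric, of "t - \<theta>"] ht
    using m M by (intro power_mono) auto
  then have "\<sigma>\<^sup>2 / (t - \<theta>)\<^sup>2 \<le> \<sigma>\<^sup>2 / (1 + \<sigma>\<^sup>2 * M / 2)\<^sup>2"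
  proof (rule divide_left_mono)
    have "0 < 1 + \<sigma>\<^sup>2 * M / 2" using M by (simp add: add_pos_nonneg)
    then show "0 < (t - \<theta>)\<^sup>2 * (1 + \<sigma>\<^sup>2 * M / 2)\<^sup>2" using tne by simp
  qed (use \<open>(1 + \<sigma>\<^sup>2 * M / 2)\<^sup>2 \<le> (t - \<theta>)\<^sup>2\<close> in auto)
  then show ?thesis using c correct_eq[OF s, of \<theta> l] by linarith
qed




lemma tail_bound:
  fixes \<sigma> M :: real
  assumes s: "0 < \<sigma>" and M: "0 < M"
  shows "exp (-M/2) + \<sigma>\<^sup>2 / (1 + \<sigma>\<^sup>2 * M / 2)\<^sup>2 \<le> 4 / M"
proof -
  have "1 + M/2 \<le> exp (M/2::real)" by (rule exp_ge_add_one_self)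
  then have "exp (-M/2) \<le> 1 / (1 + M/2)"
    using M by (simp add: exp_minus field_simps)
  also have "\<dots> \<le> 2 / M" using M by (simp add: field_simps)
  finally have a: "exp (-M/2) \<le> 2 / M" .
  define y where "y = \<sigma>\<^sup>2 * M / 2"
  have y: "0 < y" unfolding y_def using s M by simp
  have "y \<le> (1 + y)\<^sup>2" using y by (simp add: power2_eq_square algebra_simps)
  then have "\<sigma>\<^sup>2 / (1 + y)\<^sup>2 \<le> \<sigma>\<^sup>2 / y"
    using y s by (intro divide_left_mono) auto
  also have "\<dots> = 2 / M" unfolding y_def using s M by (simp add: field_simps)
  finally have b: "\<sigma>\<^sup>2 / (1 + \<sigma>\<^sup>2 * M / 2)\<^sup>2 \<le> 2 / M" unfolding y_def .
  show ?thesis using a b by simp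
qed

lemma finite_llr: "finite (set_pmf (llr_law \<sigma> \<theta> n))"
  by (induction n) auto

lemma int_bind_fin:
  fixes g :: "'b \<Rightarrow> real"
  assumes M: "finite (set_pmf M)" and N: "\<And>x. x \<in> set_pmf M \<Longrightarrow> finite (set_pmf (N x))"
    and g: "\<And>y. 0 \<le> g y"
  shows "measure_pmf.expectation (bind_pmf M N) g = measure_pmf.expectation M (\<lambda>x. measure_pmf.expectation (N x) g)"
proof -
  have "measure_pmf.expectation (bind_pmf M N) g = enn2real (\<integral>\<^sup>+y. ennreal (g y) \<partial>bind_pmf M N)"
    using g by (intro integral_eq_nn_integral) auto
  also have "\<dots> = enn2real (\<integral>\<^sup>+x. \<integral>\<^sup>+y. ennreal (g y) \<partial>N x \<partial>M)"
    by simp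
  also have "(\<integral>\<^sup>+x. \<integral>\<^sup>+y. ennreal (g y) \<partial>N x \<partial>M) = (\<integral>\<^sup>+x. ennreal (measure_pmf.expectation (N x) g) \<partial>M)"
  proof (intro nn_integral_cong_AE)
    show "AE x in measure_pmf M. (\<integral>\<^sup>+y. ennreal (g y) \<partial>N x) = ennreal (measure_pmf.expectation (N x) g)"
      unfolding AE_measure_pmf_iff
      using N g by (auto intro!: nn_integral_eq_integral integrable_measure_pmf_finite)
  qed
  also have "enn2real \<dots> = measure_pmf.expectation M (\<lambda>x. measure_pmf.expectation (N x) g)"
    using g by (intro enn2real_nn_integral_eq_integral) (auto intro: integral_nonneg_AE)
  finally show ?thesis .
qed



definition Zf :: "real \<Rightarrow> real \<Rightarrow> real" where "Zf \<theta> l = exp (-(\<theta> * l) / 2)"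

definition BC :: "real \<Rightarrow> real \<Rightarrow> real" where
  "BC \<sigma> l = sqrt (xprob \<sigma> l 1 1 * xprob \<sigma> l (-1) 1) + sqrt ((1 - xprob \<sigma> l 1 1) * (1 - xprob \<sigma> l (-1) 1))"

lemma Zf_pos: "0 < Zf \<theta> l" unfolding Zf_def by simp

lemma Zf_add: "Zf \<theta> (l + d) = Zf \<theta> l * exp (-(\<theta> * d) / 2)"
proof -
  have "-(\<theta> * (l + d)) / 2 = -(\<theta> * l) / 2 + (-(\<theta> * d) / 2)" by (simp add: field_simps)
  then show ?thesis unfolding Zf_def by (simp only: exp_add)
qed

lemma sqrt_exp:
  fixes a b :: real
  assumes a: "0 < a" and b: "0 < b"
  shows "a * exp (-(ln (a / b)) / 2) = sqrt (a * b)"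
proof -
  have "exp (-(ln (a / b)) / 2) = exp (ln (b / a) * (1/2))"
    using a b by (simp add: ln_div)
  also have "\<dots> = (b / a) powr (1/2)" using a b by (simp add: powr_def)
  also have "\<dots> = sqrt (b / a)" using a b by (simp add: powr_half_sqrt)
  finally have e: "exp (-(ln (a / b)) / 2) = sqrt (b / a)" .
  have "sqrt (a * b) = sqrt (a\<^sup>2 * (b / a))" using a by (simp add: power2_eq_square)
  also have "\<dots> = a * sqrt (b / a)" using a by (subst real_sqrt_mult) simp
  finally show ?thesis using e by simp
qed

lemma sqrt_ineq:
  fixes a b :: real
  assumes "0 \<le> a" "a \<le> 1" "0 \<le> b" "b \<le> 1"
  shows "sqrt (a * b) \<le> (a + b) / 2 - (a - b)\<^sup>2 / 8"
proof -
  define x where "x = sqrt a"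
  define y where "y = sqrt b"
  have ax: "a = x\<^sup>2" "b = y\<^sup>2" unfolding x_def y_def using assms by simp_all
  have x: "0 \<le> x" "x \<le> 1" "0 \<le> y" "y \<le> 1" unfolding x_def y_def using assms by auto
  have s: "sqrt (a * b) = x * y" unfolding x_def y_def using assms by (simp add: real_sqrt_mult)
  have "(x + y)\<^sup>2 \<le> 2\<^sup>2" using x by (intro power_mono) auto
  then have "0 \<le> (x - y)\<^sup>2 * (4 - (x + y)\<^sup>2)" by simp
  moreover have "(x\<^sup>2 + y\<^sup>2) / 2 - (x\<^sup>2 - y\<^sup>2)\<^sup>2 / 8 - x * y = (x - y)\<^sup>2 * (4 - (x + y)\<^sup>2) / 8"
    by (simp add: power2_eq_square field_simps)
  moreover have r: "(a + b)/2 - (a - b)\<^sup>2/8 = (x\<^sup>2 + y\<^sup>2) / 2 - (x\<^sup>2 - y\<^sup>2)\<^sup>2 / 8" using ax by simp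
  ultimately show ?thesis using s by linarith
qed

lemma xprob_01: "0 < \<sigma> \<Longrightarrow> 0 < xprob \<sigma> l \<theta> 1 \<and> xprob \<sigma> l \<theta> 1 < 1"
  using xprob_pos xprob_lt1 by blast

lemma BC_bound:
  assumes s: "0 < \<sigma>"
  shows "0 \<le> BC \<sigma> l" "BC \<sigma> l \<le> 1 - (xprob \<sigma> l 1 1 - xprob \<sigma> l (-1) 1)\<^sup>2 / 4"
proof -
  define p where "p = xprob \<sigma> l 1 1"
  define q where "q = xprob \<sigma> l (-1) 1"
  have pq: "0 < p" "p < 1" "0 < q" "q < 1" unfolding p_def q_def using xprob_01[OF s] by auto
  show "0 \<le> BC \<sigma> l" unfolding BC_def p_def[symmetric] q_def[symmetric]
    using pq by (intro add_nonneg_nonneg real_sqrt_ge_zero mult_nonneg_nonneg) auto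
  have "BC \<sigma> l \<le> ((p + q) / 2 - (p - q)\<^sup>2 / 8) + (((1 - p) + (1 - q)) / 2 - ((1 - p) - (1 - q))\<^sup>2 / 8)"
    unfolding BC_def p_def[symmetric] q_def[symmetric]
    using pq by (intro add_mono sqrt_ineq) auto
  also have "\<dots> = 1 - (p - q)\<^sup>2 / 4" by (simp add: power2_eq_square field_simps)
  finally show "BC \<sigma> l \<le> 1 - (xprob \<sigma> l 1 1 - xprob \<sigma> l (-1) 1)\<^sup>2 / 4" unfolding p_def q_def .
qed

lemma step_pointwise:
  assumes s: "0 < \<sigma>" and th: "\<theta> = 1 \<or> \<theta> = -1"
  shows "Zf \<theta> (upd \<sigma> l 1) * xprob \<sigma> l \<theta> 1 + Zf \<theta> (upd \<sigma> l (-1)) * (1 - xprob \<sigma> l \<theta> 1) = Zf \<theta> l * BC \<sigma> l"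
proof -
  define p where "p = xprob \<sigma> l 1 1"
  define q where "q = xprob \<sigma> l (-1) 1"
  have pq: "0 < p" "p < 1" "0 < q" "q < 1" unfolding p_def q_def using xprob_01[OF s] by auto
  have u1: "upd \<sigma> l 1 = l + ln (p / q)" unfolding upd_def p_def q_def ..
  have u2: "upd \<sigma> l (-1) = l + ln ((1 - p) / (1 - q))" 
    unfolding upd_def p_def q_def xprob_neg[OF s] ..
  have BCe: "BC \<sigma> l = sqrt (p * q) + sqrt ((1 - p) * (1 - q))" unfolding BC_def p_def q_def ..
  show ?thesis
  proof (cases "\<theta> = 1")
    case True
    have F1: "p * exp (-(ln (p / q)) / 2) = sqrt (p * q)" using pq by (intro sqrt_exp) auto
    have F2: "(1 - p) * exp (-(ln ((1 - p) / (1 - q))) / 2) = sqrt ((1 - p) * (1 - q))" 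
      using pq by (intro sqrt_exp) auto
    have xt: "xprob \<sigma> l \<theta> 1 = p" using True p_def by simp
    have L: "Zf \<theta> (upd \<sigma> l 1) * p + Zf \<theta> (upd \<sigma> l (-1)) * (1 - p) = 
      Zf \<theta> l * (p * exp (-(ln (p / q)) / 2)) + Zf \<theta> l * ((1 - p) * exp (-(ln ((1 - p) / (1 - q))) / 2))"
      unfolding u1 u2 Zf_add True by simp
    show ?thesis unfolding xt L F1 F2 BCe distrib_left ..
  next
    case False
    then have t: "\<theta> = -1" using th by simp
    have F1: "q * exp (-(ln (q / p)) / 2) = sqrt (p * q)" using pq sqrt_exp[of q p] by (simp add: mult.commute)
    have F2: "(1 - q) * exp (-(ln ((1 - q) / (1 - p))) / 2) = sqrt ((1 - p) * (1 - q))" 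
      using pq sqrt_exp[of "1 - q" "1 - p"] by (simp add: mult.commute)
    have xt: "xprob \<sigma> l \<theta> 1 = q" using t q_def by simp
    have L: "Zf \<theta> (upd \<sigma> l 1) * q + Zf \<theta> (upd \<sigma> l (-1)) * (1 - q) = 
      Zf \<theta> l * (q * exp (-(ln (q / p)) / 2)) + Zf \<theta> l * ((1 - q) * exp (-(ln ((1 - q) / (1 - p))) / 2))"
      unfolding u1 u2 Zf_add t using pq by (simp add: ln_div)
    show ?thesis unfolding xt L F1 F2 BCe distrib_left ..
  qed
qed




lemma finite_bern_map: "finite (set_pmf (map_pmf f (bernoulli_pmf p)))"
  by (simp add: finite_imageI)

lemma step:
  assumes s: "0 < \<sigma>" and th: "\<theta> = 1 \<or> \<theta> = -1"
  shows "measure_pmf.expectation (llr_law \<sigma> \<theta> (Suc n)) (Zf \<theta>) =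
         measure_pmf.expectation (llr_law \<sigma> \<theta> n) (\<lambda>l. Zf \<theta> l * BC \<sigma> l)"
proof -
  have "measure_pmf.expectation (llr_law \<sigma> \<theta> (Suc n)) (Zf \<theta>) =
     measure_pmf.expectation (llr_law \<sigma> \<theta> n) (\<lambda>l. measure_pmf.expectation 
        (map_pmf (\<lambda>b. upd \<sigma> l (if b then 1 else -1)) (bernoulli_pmf (xprob \<sigma> l \<theta> 1))) (Zf \<theta>))"
    unfolding llr_law.simps
    by (rule int_bind_fin[OF finite_llr finite_bern_map]) (simp add: Zf_pos less_imp_le)
  also have "\<dots> = measure_pmf.expectation (llr_law \<sigma> \<theta> n) (\<lambda>l. Zf \<theta> l * BC \<sigma> l)"
  proof (rule Bochner_Integration.integral_cong[OF refl])
    fix l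
    have p: "0 \<le> xprob \<sigma> l \<theta> 1" "xprob \<sigma> l \<theta> 1 \<le> 1" using xprob_01[OF s, of l \<theta>] by auto
    show "measure_pmf.expectation 
        (map_pmf (\<lambda>b. upd \<sigma> l (if b then 1 else -1)) (bernoulli_pmf (xprob \<sigma> l \<theta> 1))) (Zf \<theta>) = Zf \<theta> l * BC \<sigma> l"
      using step_pointwise[OF s th, of l] p by simp
  qed
  finally show ?thesis .
qed

lemma BC_le1: "0 < \<sigma> \<Longrightarrow> BC \<sigma> l \<le> 1"
  using BC_bound(2)[of \<sigma> l] by (smt (verit) divide_nonneg_nonneg zero_le_power2)

lemma a_mono:
  assumes s: "0 < \<sigma>" and th: "\<theta> = 1 \<or> \<theta> = -1"
  shows "measure_pmf.expectation (llr_law \<sigma> \<theta> (Suc n)) (Zf \<theta>) \<le> measure_pmf.expectation (llr_law \<sigma> \<theta> n) (Zf \<theta>)"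
  unfolding step[OF s th]
  by (intro integral_mono integrable_measure_pmf_finite finite_llr)
     (use BC_le1[OF s] Zf_pos in \<open>simp add: mult_left_le less_imp_le\<close>)

lemma a0: "measure_pmf.expectation (llr_law \<sigma> \<theta> 0) (Zf \<theta>) = 1"
  by (simp add: Zf_def)

lemma a_le1:
  assumes s: "0 < \<sigma>" and th: "\<theta> = 1 \<or> \<theta> = -1"
  shows "measure_pmf.expectation (llr_law \<sigma> \<theta> n) (Zf \<theta>) \<le> 1"
proof (induction n)
  case 0 then show ?case by (simp add: Zf_def)
next
  case (Suc n) then show ?case using a_mono[OF s th, of n] by linarith
qed

lemma a_nonneg: "0 \<le> measure_pmf.expectation (llr_law \<sigma> \<theta> n) (Zf \<theta>)"
  by (intro integral_nonneg_AE) (simp add: Zf_pos less_imp_le)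

abbreviation Ex where "Ex \<sigma> \<theta> n f \<equiv> measure_pmf.expectation (llr_law \<sigma> \<theta> n) f"

lemma int_llr: "integrable (measure_pmf (llr_law \<sigma> \<theta> n)) (f :: real \<Rightarrow> real)"
  by (intro integrable_measure_pmf_finite finite_llr)

lemma gap:
  assumes s: "0 < \<sigma>" and th: "\<theta> = 1 \<or> \<theta> = -1" and M: "0 \<le> M"
  shows "exp (-M/2) * (dgap \<sigma> M)\<^sup>2 / 4 * Ex \<sigma> \<theta> n (indicator {l. \<bar>l\<bar> \<le> M} :: real \<Rightarrow> real)
     \<le> Ex \<sigma> \<theta> n (Zf \<theta>) - Ex \<sigma> \<theta> (Suc n) (Zf \<theta>)"
proof -
  define \<kappa> where "\<kappa> = exp (-M/2) * (dgap \<sigma> M)\<^sup>2 / 4"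
  have "\<kappa> * Ex \<sigma> \<theta> n (indicator {l. \<bar>l\<bar> \<le> M} :: real \<Rightarrow> real) = Ex \<sigma> \<theta> n (\<lambda>l. \<kappa> * indicator {l. \<bar>l\<bar> \<le> M} l)"
    by simp
  also have "\<dots> \<le> Ex \<sigma> \<theta> n (\<lambda>l. Zf \<theta> l - Zf \<theta> l * BC \<sigma> l)"
  proof (intro integral_mono int_llr)
    fix l
    show "\<kappa> * indicator {l. \<bar>l\<bar> \<le> M} l \<le> Zf \<theta> l - Zf \<theta> l * BC \<sigma> l"
    proof (cases "\<bar>l\<bar> \<le> M")
      case True
      have "\<theta> * l \<le> M" using th True by auto
      then have z: "exp (-M/2) \<le> Zf \<theta> l" unfolding Zf_def by simp
      have d: "dgap \<sigma> M \<le> xprob \<sigma> l 1 1 - xprob \<sigma> l (-1) 1" by (rule xprob_gap[OF s True])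
      have "(dgap \<sigma> M)\<^sup>2 \<le> (xprob \<sigma> l 1 1 - xprob \<sigma> l (-1) 1)\<^sup>2"
        using d dgap_pos[OF s, of M] by (intro power_mono) auto
      then have b: "(dgap \<sigma> M)\<^sup>2 / 4 \<le> 1 - BC \<sigma> l" using BC_bound(2)[OF s, of l] by linarith
      have "exp (-M/2) * ((dgap \<sigma> M)\<^sup>2 / 4) \<le> Zf \<theta> l * (1 - BC \<sigma> l)"
        using z b Zf_pos[of \<theta> l] by (intro mult_mono) auto
      then show ?thesis using True unfolding \<kappa>_def by (simp add: algebra_simps)
    next
      case False
      have "0 \<le> Zf \<theta> l * (1 - BC \<sigma> l)" using BC_le1[OF s, of l] Zf_pos[of \<theta> l] by simp
      then show ?thesis using False by (simp add: algebra_simps)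
    qed
  qed
  also have "\<dots> = Ex \<sigma> \<theta> n (Zf \<theta>) - Ex \<sigma> \<theta> (Suc n) (Zf \<theta>)"
    unfolding step[OF s th] by (rule Bochner_Integration.integral_diff[OF int_llr int_llr])
  finally show ?thesis unfolding \<kappa>_def .
qed

lemma ind_small_tendsto:
  assumes s: "0 < \<sigma>" and th: "\<theta> = 1 \<or> \<theta> = -1" and M: "0 \<le> M"
  shows "(\<lambda>n. Ex \<sigma> \<theta> n (indicator {l. \<bar>l\<bar> \<le> M} :: real \<Rightarrow> real)) \<longlonglongrightarrow> 0"
proof -
  define \<kappa> where "\<kappa> = exp (-M/2) * (dgap \<sigma> M)\<^sup>2 / 4"
  have kpos: "0 < \<kappa>" unfolding \<kappa>_def using dgap_pos[OF s, of M] by simp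
  have tel: "(\<Sum>n<N. \<kappa> * Ex \<sigma> \<theta> n (indicator {l. \<bar>l\<bar> \<le> M} :: real \<Rightarrow> real)) \<le> Ex \<sigma> \<theta> 0 (Zf \<theta>) - Ex \<sigma> \<theta> N (Zf \<theta>)" for N
  proof (induction N)
    case 0 then show ?case by simp
  next
    case (Suc N)
    then show ?case using gap[OF s th M, of N] unfolding \<kappa>_def by simp
  qed
  have nn: "0 \<le> Ex \<sigma> \<theta> n (indicator {l. \<bar>l\<bar> \<le> M} :: real \<Rightarrow> real)" for n
    by (intro integral_nonneg_AE) auto
  have "summable (\<lambda>n. Ex \<sigma> \<theta> n (indicator {l. \<bar>l\<bar> \<le> M} :: real \<Rightarrow> real))"
  proof (rule summableI_nonneg_bounded[where x="1 / \<kappa>"])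
    show "0 \<le> Ex \<sigma> \<theta> n (indicator {l. \<bar>l\<bar> \<le> M} :: real \<Rightarrow> real)" for n by (rule nn)
    fix N
    have "\<kappa> * (\<Sum>n<N. Ex \<sigma> \<theta> n (indicator {l. \<bar>l\<bar> \<le> M} :: real \<Rightarrow> real)) \<le> 1"
      using tel[of N] a0[of \<sigma> \<theta>] a_nonneg[of \<sigma> \<theta> N] by (simp add: sum_distrib_left)
    then show "(\<Sum>n<N. Ex \<sigma> \<theta> n (indicator {l. \<bar>l\<bar> \<le> M} :: real \<Rightarrow> real)) \<le> 1 / \<kappa>"
      using kpos by (simp add: field_simps mult.commute)
  qed
  then show ?thesis by (rule summable_LIMSEQ_zero)
qed

lemma markov:
  assumes s: "0 < \<sigma>" and th: "\<theta> = 1 \<or> \<theta> = -1"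
  shows "Ex \<sigma> \<theta> n (indicator {l. \<theta> * l < -M}) \<le> exp (-M/2)"
proof -
  have "Ex \<sigma> \<theta> n (indicator {l. \<theta> * l < -M}) \<le> Ex \<sigma> \<theta> n (\<lambda>l. exp (-M/2) * Zf \<theta> l)"
  proof (intro integral_mono int_llr)
    fix l
    show "indicator {l. \<theta> * l < -M} l \<le> exp (-M/2) * Zf \<theta> l"
    proof (cases "\<theta> * l < -M")
      case True
      then have "0 \<le> -M/2 + -(\<theta> * l) / 2" by simp
      have e: "exp (-M/2) * exp (-(\<theta> * l) / 2) = exp (-M/2 + -(\<theta> * l) / 2)" by (rule exp_add[symmetric])
      have "1 \<le> exp (-M/2) * exp (-(\<theta> * l) / 2)" unfolding e using \<open>0 \<le> -M/2 + -(\<theta> * l) / 2\<close> by simp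
      then show ?thesis using True unfolding Zf_def by simp
    next
      case False
      then show ?thesis using Zf_pos[of \<theta> l] by simp
    qed
  qed
  also have "\<dots> = exp (-M/2) * Ex \<sigma> \<theta> n (Zf \<theta>)" by simp
  also have "\<dots> \<le> exp (-M/2)" using a_le1[OF s th, of n] by simp
  finally show ?thesis .
qed




lemma conv_theta:
  assumes s: "0 < \<sigma>" and th: "\<theta> = 1 \<or> \<theta> = -1"
  shows "(\<lambda>n. Ex \<sigma> \<theta> n (correct_prob_given \<sigma> \<theta>)) \<longlonglongrightarrow> 1"
proof -
  have bound: "1 - Ex \<sigma> \<theta> n (correct_prob_given \<sigma> \<theta>) \<le> 
     Ex \<sigma> \<theta> n (indicator {l. \<bar>l\<bar> \<le> M} :: real \<Rightarrow> real) + (exp (-M/2) + \<sigma>\<^sup>2 / (1 + \<sigma>\<^sup>2 * M / 2)\<^sup>2)"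
    if M: "0 < M" for M n
  proof -
    define C where "C = \<sigma>\<^sup>2 / (1 + \<sigma>\<^sup>2 * M / 2)\<^sup>2"
    have "1 - Ex \<sigma> \<theta> n (correct_prob_given \<sigma> \<theta>) = Ex \<sigma> \<theta> n (\<lambda>l. 1 - correct_prob_given \<sigma> \<theta> l)"
      using Bochner_Integration.integral_diff[OF int_llr int_llr, of \<sigma> \<theta> n "\<lambda>_. 1" "correct_prob_given \<sigma> \<theta>"]
      by simp
    also have "\<dots> \<le> Ex \<sigma> \<theta> n (\<lambda>l. indicator {l. \<bar>l\<bar> \<le> M} l + indicator {l. \<theta> * l < -M} l + C)"
    proof (intro integral_mono int_llr)
      fix l
      have c0: "0 \<le> correct_prob_given \<sigma> \<theta> l" by (rule correct_ge0)
      have C0: "0 \<le> C" unfolding C_def by simp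
      consider "M \<le> \<theta> * l" | "\<theta> * l < -M" | "-M \<le> \<theta> * l" "\<theta> * l < M" by linarith
      then show "1 - correct_prob_given \<sigma> \<theta> l \<le> indicator {l. \<bar>l\<bar> \<le> M} l + indicator {l. \<theta> * l < -M} l + C"
      proof cases
        case 1
        then show ?thesis using correct_far[OF s th M 1] unfolding C_def by (simp split: split_indicator)
      next
        case 2
        then show ?thesis using c0 C0 by (simp split: split_indicator)
      next
        case 3
        then have "\<bar>l\<bar> \<le> M" using th by auto
        then show ?thesis using c0 C0 by (simp split: split_indicator)
      qed
    qed
    also have "\<dots> = Ex \<sigma> \<theta> n (indicator {l. \<bar>l\<bar> \<le> M} :: real \<Rightarrow> real) + Ex \<sigma> \<theta> n (indicator {l. \<theta> * l < -M} :: real \<Rightarrow> real) + C"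
      using int_llr by simp
    also have "\<dots> \<le> Ex \<sigma> \<theta> n (indicator {l. \<bar>l\<bar> \<le> M} :: real \<Rightarrow> real) + exp (-M/2) + C"
      using markov[OF s th, of n M] by simp
    finally show ?thesis unfolding C_def by simp
  qed
  have le1: "Ex \<sigma> \<theta> n (correct_prob_given \<sigma> \<theta>) \<le> 1" for n
  proof -
    have "Ex \<sigma> \<theta> n (correct_prob_given \<sigma> \<theta>) \<le> Ex \<sigma> \<theta> n (\<lambda>_. 1)"
      by (intro integral_mono int_llr correct_le1[OF s])
    then show ?thesis by simp
  qed
  show ?thesis
  proof (rule LIMSEQ_I)
    fix r :: real assume r: "0 < r"
    define M where "M = 8 / r"
    have M: "0 < M" unfolding M_def using r by simp
    have tb: "exp (-M/2) + \<sigma>\<^sup>2 / (1 + \<sigma>\<^sup>2 * M / 2)\<^sup>2 \<le> r / 2"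
      using tail_bound[OF s M] unfolding M_def using r by simp
    have "(\<lambda>n. Ex \<sigma> \<theta> n (indicator {l. \<bar>l\<bar> \<le> M} :: real \<Rightarrow> real)) \<longlonglongrightarrow> 0"
      using ind_small_tendsto[OF s th, of M] M by simp
    then obtain no where no: "\<And>n. n \<ge> no \<Longrightarrow> norm (Ex \<sigma> \<theta> n (indicator {l. \<bar>l\<bar> \<le> M} :: real \<Rightarrow> real) - 0) < r / 2"
      using LIMSEQ_D[of _ 0 "r/2"] r by (metis half_gt_zero)
    show "\<exists>no. \<forall>n\<ge>no. norm (Ex \<sigma> \<theta> n (correct_prob_given \<sigma> \<theta>) - 1) < r"
    proof (intro exI allI impI)
      fix n assume n: "no \<le> n"
      have "Ex \<sigma> \<theta> n (indicator {l. \<bar>l\<bar> \<le> M} :: real \<Rightarrow> real) < r / 2" using no[OF n] by simp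
      then have "1 - Ex \<sigma> \<theta> n (correct_prob_given \<sigma> \<theta>) < r"
        using bound[OF M, of n] tb by linarith
      then show "norm (Ex \<sigma> \<theta> n (correct_prob_given \<sigma> \<theta>) - 1) < r"
        using le1[of n] by simp
    qed
  qed
qed

theorem theorem9:
  fixes \<sigma> :: real
  assumes "\<sigma> > 0"
  shows "(\<lambda>n. prob_correct \<sigma> n) \<longlonglongrightarrow> 1"
proof -
  have eq: "prob_correct \<sigma> (Suc n) = 1/2 * Ex \<sigma> (-1) n (correct_prob_given \<sigma> (-1)) + 1/2 * Ex \<sigma> 1 n (correct_prob_given \<sigma> 1)" for n
    unfolding prob_correct_def by simp
  have "(\<lambda>n. 1/2 * Ex \<sigma> (-1) n (correct_prob_given \<sigma> (-1)) + 1/2 * Ex \<sigma> 1 n (correct_prob_given \<sigma> 1)) \<longlonglongrightarrow> 1/2 * 1 + 1/2 * 1"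
    by (intro tendsto_intros conv_theta[OF assms]) auto
  then have "(\<lambda>n. prob_correct \<sigma> (Suc n)) \<longlonglongrightarrow> 1" unfolding eq by simp
  then show ?thesis by (rule LIMSEQ_imp_Suc)
qed


end
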